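(* Let $k$ be a positive integer and let $G$ be a finite, simple, undirected, connected graph of order at least $4$. (a) If $G$ has a twin equivalence class of cardinality at least $4$, then $O_{R,k}(G)=\mathcal{B}$ for all $k$. (b) If $G$ has two distinct twin equivalence classes of cardinality $3$, then $O_{R,k}(G)=\mathcal{B}$ for all $k$.
   Context: Two vertices $u,w$ of $G$ are twins if $N(u)-\{w\}=N(w)-\{u\}$, where $N(v)$ is the open neighborhood of $v$; this is an equivalence relation on $V(G)$ whose classes are the twin equivalence classes. $d(x,y)$ is the shortest-path distance and $d_k(x,y)=\min\{d(x,y),k+1\}$. A set $S\subseteq V(G)$ is a distance-$k$ resolving set if for all distinct $x,y$ some $z\in S$ has $d_k(x,z)\ne d_k(y,z)$. In the Maker-Breaker distance-$k$ resolving game on $G$, Maker and Breaker alternately select a not-yet-chosen vertex; Maker wins if his selected vertices form a distance-$k$ resolving set, Breaker wins otherwise. $O_{R,k}(G)=\mathcal{M}$ if Maker has a winning strategy whether he moves first or second, $\mathcal{B}$ if Breaker has a winning strategy whether she moves first or second, and $\mathcal{N}$ if the first player has a winning strategy. *)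

theory Defs
  imports Main
begin

definition simple_graph :: "'a set \<Rightarrow> ('a \<Rightarrow> 'a \<Rightarrow> bool) \<Rightarrow> bool" where
  "simple_graph V E \<longleftrightarrow> finite V \<and> (\<forall>x y. E x y \<longrightarrow> x \<in> V \<and> y \<in> V)
     \<and> (\<forall>x y. E x y \<longrightarrow> E y x) \<and> (\<forall>x. \<not> E x x)"

definition walk :: "'a set \<Rightarrow> ('a \<Rightarrow> 'a \<Rightarrow> bool) \<Rightarrow> 'a list \<Rightarrow> bool" where
  "walk V E p \<longleftrightarrow> p \<noteq> [] \<and> set p \<subseteq> V \<and> (\<forall>i. Suc i < length p \<longrightarrow> E (p ! i) (p ! Suc i))"

definition connected_graph :: "'a set \<Rightarrow> ('a \<Rightarrow> 'a \<Rightarrow> bool) \<Rightarrow> bool" where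
  "connected_graph V E \<longleftrightarrow> (\<forall>x\<in>V. \<forall>y\<in>V. \<exists>p. walk V E p \<and> hd p = x \<and> last p = y)"

definition dist :: "'a set \<Rightarrow> ('a \<Rightarrow> 'a \<Rightarrow> bool) \<Rightarrow> 'a \<Rightarrow> 'a \<Rightarrow> nat" where
  "dist V E x y = (LEAST n. \<exists>p. walk V E p \<and> hd p = x \<and> last p = y \<and> length p = Suc n)"

definition dist_k :: "'a set \<Rightarrow> ('a \<Rightarrow> 'a \<Rightarrow> bool) \<Rightarrow> nat \<Rightarrow> 'a \<Rightarrow> 'a \<Rightarrow> nat" where
  "dist_k V E k x y = min (dist V E x y) (k + 1)"

definition resolving_k :: "'a set \<Rightarrow> ('a \<Rightarrow> 'a \<Rightarrow> bool) \<Rightarrow> nat \<Rightarrow> 'a set \<Rightarrow> bool" where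
  "resolving_k V E k S \<longleftrightarrow> S \<subseteq> V \<and>
     (\<forall>x\<in>V. \<forall>y\<in>V. x \<noteq> y \<longrightarrow> (\<exists>z\<in>S. dist_k V E k x z \<noteq> dist_k V E k y z))"

definition nbhd :: "'a set \<Rightarrow> ('a \<Rightarrow> 'a \<Rightarrow> bool) \<Rightarrow> 'a \<Rightarrow> 'a set" where
  "nbhd V E v = {u \<in> V. E v u}"

definition twins :: "'a set \<Rightarrow> ('a \<Rightarrow> 'a \<Rightarrow> bool) \<Rightarrow> 'a \<Rightarrow> 'a \<Rightarrow> bool" where
  "twins V E u w \<longleftrightarrow> nbhd V E u - {w} = nbhd V E w - {u}"

definition twin_class :: "'a set \<Rightarrow> ('a \<Rightarrow> 'a \<Rightarrow> bool) \<Rightarrow> 'a \<Rightarrow> 'a set" where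
  "twin_class V E v = {u \<in> V. twins V E u v}"

text \<open>A position is (M, B): the sets
  of vertices chosen so far by Maker and Breaker; the bool says whether it is
  Maker's turn.\<close>
inductive mwin :: "'a set \<Rightarrow> ('a \<Rightarrow> 'a \<Rightarrow> bool) \<Rightarrow> nat \<Rightarrow> 'a set \<Rightarrow> 'a set \<Rightarrow> bool \<Rightarrow> bool"
  for V E k where
  mwin_end: "V - M - B = {} \<Longrightarrow> resolving_k V E k M \<Longrightarrow> mwin V E k M B t"
| mwin_maker: "v \<in> V - M - B \<Longrightarrow> mwin V E k (insert v M) B False \<Longrightarrow> mwin V E k M B True"
| mwin_breaker: "V - M - B \<noteq> {} \<Longrightarrow> (\<forall>v \<in> V - M - B. mwin V E k M (insert v B) True)
     \<Longrightarrow> mwin V E k M B False"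

inductive bwin :: "'a set \<Rightarrow> ('a \<Rightarrow> 'a \<Rightarrow> bool) \<Rightarrow> nat \<Rightarrow> 'a set \<Rightarrow> 'a set \<Rightarrow> bool \<Rightarrow> bool"
  for V E k where
  bwin_end: "V - M - B = {} \<Longrightarrow> \<not> resolving_k V E k M \<Longrightarrow> bwin V E k M B t"
| bwin_maker: "V - M - B \<noteq> {} \<Longrightarrow> (\<forall>v \<in> V - M - B. bwin V E k (insert v M) B False)
     \<Longrightarrow> bwin V E k M B True"
| bwin_breaker: "v \<in> V - M - B \<Longrightarrow> bwin V E k M (insert v B) True \<Longrightarrow> bwin V E k M B False"

datatype outcome = Outcome_M | Outcome_B | Outcome_N

definition outcome_Rk :: "'a set \<Rightarrow> ('a \<Rightarrow> 'a \<Rightarrow> bool) \<Rightarrow> nat \<Rightarrow> outcome" where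
  "outcome_Rk V E k =
     (if mwin V E k {} {} True \<and> mwin V E k {} {} False then Outcome_M
      else if bwin V E k {} {} True \<and> bwin V E k {} {} False then Outcome_B
      else Outcome_N)"

end

theory Submission imports Defs begin

lemma twins_sym: "twins V E x y \<Longrightarrow> twins V E y x"
  unfolding twins_def by auto

lemma twins_trans:
  assumes sg: "simple_graph V E" and "twins V E u1 v" "twins V E u2 v" "u1 \<noteq> u2"
  shows "twins V E u1 u2"
proof -
  have sym: "\<And>a b. E a b \<Longrightarrow> E b a" and inV: "\<And>a b. E a b \<Longrightarrow> a \<in> V \<and> b \<in> V"
    using sg unfolding simple_graph_def by blast+
  have h1: "\<And>w. w \<noteq> v \<Longrightarrow> w \<noteq> u1 \<Longrightarrow> E u1 w = E v w"
    using assms(2) inV unfolding twins_def nbhd_def by (auto simp: set_eq_iff) 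
  have h2: "\<And>w. w \<noteq> v \<Longrightarrow> w \<noteq> u2 \<Longrightarrow> E u2 w = E v w"
    using assms(3) inV unfolding twins_def nbhd_def by (auto simp: set_eq_iff)
  have irr: "\<And>a. \<not> E a a" using sg unfolding simple_graph_def by blast
  have eqw: "\<And>w. w \<noteq> u1 \<Longrightarrow> w \<noteq> u2 \<Longrightarrow> E u1 w = E u2 w"
  proof -
    fix w assume w: "w \<noteq> u1" "w \<noteq> u2"
    show "E u1 w = E u2 w"
    proof (cases "w = v")
      case False thus ?thesis using h1 h2 w by auto
    next
      case True
      show ?thesis
      proof (cases "u1 = v \<or> u2 = v")
        case True thus ?thesis using w \<open>w = v\<close> by auto
      next
        case False
        have "E v u1 = E u2 u1" using h2[of u1] False assms(4) by auto
        moreover have "E v u2 = E u1 u2" using h1[of u2] False assms(4) by auto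
        ultimately show ?thesis using True sym by blast
      qed
    qed
  qed
  show ?thesis unfolding twins_def nbhd_def using eqw irr by (auto simp: set_eq_iff) (metis irr)+
qed

lemma walk_Cons_tl:
  assumes "walk V E (x # p)" "p \<noteq> []" shows "walk V E p"
  using assms unfolding walk_def
  by (metis Suc_less_eq length_Cons nth_Cons_Suc set_subset_Cons subset_trans)

lemma walk_Cons:
  assumes w: "walk V E p" and y: "y \<in> V" and e: "E y (hd p)" shows "walk V E (y # p)"
proof -
  have ne: "p \<noteq> []" and s: "set p \<subseteq> V" and st: "\<And>i. Suc i < length p \<Longrightarrow> E (p ! i) (p ! Suc i)"
    using w unfolding walk_def by auto
  have "\<And>i. Suc i < length (y # p) \<Longrightarrow> E ((y # p) ! i) ((y # p) ! Suc i)"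
  proof -
    fix i assume i: "Suc i < length (y # p)"
    show "E ((y # p) ! i) ((y # p) ! Suc i)"
    proof (cases i)
      case 0 thus ?thesis using e ne by (simp add: hd_conv_nth)
    next
      case (Suc j) thus ?thesis using st i by simp
    qed
  qed
  thus ?thesis using s y unfolding walk_def by simp
qed

lemma dist_le_walk:
  assumes "walk V E p" "hd p = x" "last p = z" "length p = Suc n"
  shows "dist V E x z \<le> n"
  unfolding dist_def by (rule Least_le) (use assms in blast)

lemma dist_twin_le:
  assumes sg: "simple_graph V E" and conn: "connected_graph V E"
    and tw: "twins V E x y" and V: "x \<in> V" "y \<in> V" "z \<in> V" and ne: "z \<noteq> x" "z \<noteq> y"
  shows "dist V E y z \<le> dist V E x z"
proof -
  define P where "P = (\<lambda>n. \<exists>p. walk V E p \<and> hd p = x \<and> last p = z \<and> length p = Suc n)"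
  obtain p where p: "walk V E p" "hd p = x" "last p = z" using conn V unfolding connected_graph_def by blast
  have "p \<noteq> []" using p(1) unfolding walk_def by blast
  hence "length p = Suc (length p - 1)" by simp
  hence "P (length p - 1)" unfolding P_def using p by blast
  hence "P (LEAST n. P n)" by (rule LeastI)
  hence "P (dist V E x z)" unfolding dist_def P_def .
  then obtain q where q: "walk V E q" "hd q = x" "last q = z" "length q = Suc (dist V E x z)"
    unfolding P_def by blast
  have "q \<noteq> []" using q(1) unfolding walk_def by blast
  then obtain q' where q': "q = x # q'" using q(2) by (cases q) auto
  have "q' \<noteq> []" using q(3) q' ne(1) by auto
  then obtain w q'' where w: "q' = w # q''" by (cases q') auto
  have "Suc 0 < length q" using q' w by simp
  hence Eq: "E (q ! 0) (q ! Suc 0)" using q(1) unfolding walk_def by blast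
  have q0: "q ! 0 = x" "q ! Suc 0 = w" unfolding q' w by simp_all
  have Exw: "E x w" using Eq unfolding q0 .
  have "walk V E (x # q')" using q(1) unfolding q' .
  hence wq': "walk V E q'" using walk_Cons_tl \<open>q' \<noteq> []\<close> by metis
  show ?thesis
  proof (cases "w = y")
    case True
    have "hd q' = y" "last q' = z" "length q' = Suc (length q'')"
      using w True q(3) q' \<open>q' \<noteq> []\<close> by auto
    hence "dist V E y z \<le> length q''" by (rule dist_le_walk[OF wq'])
    thus ?thesis using q(4) q' w by simp
  next
    case False
    have "w \<in> V" using Exw sg unfolding simple_graph_def by blast
    hence "w \<in> nbhd V E x - {y}" using Exw False unfolding nbhd_def by blast
    hence "w \<in> nbhd V E y" using tw unfolding twins_def by blast
    hence Eyw: "E y w" unfolding nbhd_def by blast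
    have wy: "walk V E (y # q')" using walk_Cons[OF wq' V(2)] Eyw w by simp
    have "hd (y # q') = y" "last (y # q') = z" "length (y # q') = Suc (dist V E x z)"
      using q q' \<open>q' \<noteq> []\<close> by auto
    thus ?thesis by (rule dist_le_walk[OF wy])
  qed
qed

lemma not_resolving:
  assumes sg: "simple_graph V E" and conn: "connected_graph V E"
    and tw: "twins V E x y" and V: "x \<in> V" "y \<in> V" "x \<noteq> y" and M: "M \<subseteq> V" "x \<notin> M" "y \<notin> M"
  shows "\<not> resolving_k V E k M"
proof -
  have "\<forall>z\<in>M. dist V E x z = dist V E y z"
  proof
    fix z assume z: "z \<in> M"
    hence zz: "z \<in> V" "z \<noteq> x" "z \<noteq> y" using M by auto
    show "dist V E x z = dist V E y z"
      using dist_twin_le[OF sg conn tw V(1,2) zz] dist_twin_le[OF sg conn twins_sym[OF tw] V(2,1) zz(1,3,2)]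
      by (rule antisym[rotated])
  qed
  hence "\<forall>z\<in>M. dist_k V E k x z = dist_k V E k y z" unfolding dist_k_def by simp
  hence h: "\<not> (\<exists>z\<in>M. dist_k V E k x z \<noteq> dist_k V E k y z)" by simp
  show ?thesis
  proof
    assume "resolving_k V E k M"
    hence "\<forall>x\<in>V. \<forall>y\<in>V. x \<noteq> y \<longrightarrow> (\<exists>z\<in>M. dist_k V E k x z \<noteq> dist_k V E k y z)"
      unfolding resolving_k_def by blast
    hence "\<exists>z\<in>M. dist_k V E k x z \<noteq> dist_k V E k y z" using V by blast
    thus False using h by blast
  qed
qed

lemma mwin_not_bwin:
  assumes "mwin V E k M B t" shows "\<not> bwin V E k M B t"
  using assms
proof (induction rule: mwin.induct)
  case (mwin_end M B t)
  then show ?case by (auto elim: bwin.cases)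
next
  case (mwin_maker v M B)
  then show ?case by (auto elim: bwin.cases)
next
  case (mwin_breaker M B)
  then show ?case by (auto elim: bwin.cases)
qed

lemma L1:
  assumes sg: "simple_graph V E" and conn: "connected_graph V E"
    and tw: "twins V E a b" and V: "a \<in> V" "b \<in> V" "a \<noteq> b"
  shows "a \<in> B \<Longrightarrow> b \<in> B \<Longrightarrow> M \<subseteq> V \<Longrightarrow> a \<notin> M \<Longrightarrow> b \<notin> M \<Longrightarrow> bwin V E k M B t"
proof (induction "card (V - M - B)" arbitrary: M B t rule: less_induct)
  case less
  have fin: "finite V" using sg unfolding simple_graph_def by blast
  show ?case
  proof (cases "V - M - B = {}")
    case True
    thus ?thesis using not_resolving[OF sg conn tw V less.prems(3-5)] by (rule bwin_end)
  next
    case False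
    have IH: "bwin V E k (insert v M) B t'" "bwin V E k M (insert v B) t'" if v: "v \<in> V - M - B" for v t'
    proof -
      have "V - insert v M - B = (V - M - B) - {v}" "V - M - insert v B = (V - M - B) - {v}" by auto
      hence c: "card (V - insert v M - B) < card (V - M - B)" "card (V - M - insert v B) < card (V - M - B)"
        using v fin by (metis card_Diff1_less finite_Diff)+
      have "insert v M \<subseteq> V" "a \<notin> insert v M" "b \<notin> insert v M"
        using v less.prems by auto
      thus "bwin V E k (insert v M) B t'" using less.hyps[OF c(1)] less.prems by blast
      show "bwin V E k M (insert v B) t'" using less.hyps[OF c(2)] less.prems by blast
    qed
    have T: "bwin V E k M B True"
      by (rule bwin_maker) (use False IH(1) in auto)
    from False obtain v where v: "v \<in> V - M - B" by blast
    have F: "bwin V E k M B False" by (rule bwin_breaker[OF v IH(2)[OF v]])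
    show ?thesis using T F by (metis (full_types))
  qed
qed

lemma L2:
  assumes sg: "simple_graph V E" and conn: "connected_graph V E"
    and t: "twins V E x y" "twins V E x z"
    and d: "x \<noteq> y" "x \<noteq> z" "y \<noteq> z"
    and V: "x \<in> V" "y \<in> V" "z \<in> V" and B: "x \<in> B" "y \<notin> B" "z \<notin> B"
    and M: "M \<subseteq> V" "x \<notin> M" "y \<notin> M" "z \<notin> M"
  shows "bwin V E k M B True"
proof (rule bwin_maker)
  show "V - M - B \<noteq> {}" using V B M by blast
  show "\<forall>v\<in>V - M - B. bwin V E k (insert v M) B False"
  proof
    fix v assume v: "v \<in> V - M - B"
    show "bwin V E k (insert v M) B False"
    proof (cases "v = y")
      case True
      have "bwin V E k (insert v M) (insert z B) True"
        by (rule L1[OF sg conn t(2) V(1) V(3) d(2)]) (use B M V v True d in auto)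
      thus ?thesis by (rule bwin_breaker[rotated]) (use B M V v True d in auto)
    next
      case False
      have "bwin V E k (insert v M) (insert y B) True"
        by (rule L1[OF sg conn t(1) V(1) V(2) d(1)]) (use B M V v False d in auto)
      thus ?thesis by (rule bwin_breaker[rotated]) (use B M V v False d in auto)
    qed
  qed
qed

lemma L3:
  assumes sg: "simple_graph V E" and conn: "connected_graph V E"
    and t: "twins V E x y" "twins V E x z"
    and d: "x \<noteq> y" "x \<noteq> z" "y \<noteq> z"
    and V: "x \<in> V" "y \<in> V" "z \<in> V" and B: "x \<notin> B" "y \<notin> B" "z \<notin> B"
    and M: "M \<subseteq> V" "x \<notin> M" "y \<notin> M" "z \<notin> M"
  shows "bwin V E k M B False"
proof (rule bwin_breaker[of x])
  show "x \<in> V - M - B" using V M B by blast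
  show "bwin V E k M (insert x B) True"
    by (rule L2[OF sg conn t d V]) (use B M d in auto)
qed

lemma twins_refl: "twins V E a a" unfolding twins_def by simp

lemma twins_trans2:
  assumes sg: "simple_graph V E" and "twins V E a b" "twins V E b c"
  shows "twins V E a c"
proof (cases "a = c")
  case True thus ?thesis by (simp add: twins_refl)
next
  case False thus ?thesis using twins_trans[OF sg assms(2) twins_sym[OF assms(3)]] by blast
qed

lemma class_twins:
  assumes sg: "simple_graph V E" and "p \<in> twin_class V E v" "q \<in> twin_class V E v"
  shows "twins V E p q"
proof -
  have "twins V E p v" "twins V E q v" using assms(2,3) unfolding twin_class_def by simp_all
  thus ?thesis using twins_trans2[OF sg _ twins_sym] by blast
qed

lemma outcome_B:
  assumes "bwin V E k {} {} True" "bwin V E k {} {} False"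
  shows "outcome_Rk V E k = Outcome_B"
  using assms mwin_not_bwin[of V E k "{}" "{}" True] unfolding outcome_Rk_def by auto

lemma bwin4:
  assumes sg: "simple_graph V E" and conn: "connected_graph V E"
    and S: "a \<in> S" "b \<in> S" "c \<in> S" "d \<in> S" "S \<subseteq> V"
    and tw: "\<And>p q. p \<in> S \<Longrightarrow> q \<in> S \<Longrightarrow> twins V E p q"
    and dd: "a \<noteq> b" "a \<noteq> c" "a \<noteq> d" "b \<noteq> c" "b \<noteq> d" "c \<noteq> d"
  shows "bwin V E k {} {} True" "bwin V E k {} {} False"
proof -
  have V: "a \<in> V" "b \<in> V" "c \<in> V" "d \<in> V" using S by auto
  show "bwin V E k {} {} False"
    by (rule L3[OF sg conn tw tw, of a b c]) (use S V dd in auto)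
  show "bwin V E k {} {} True"
  proof (rule bwin_maker)
    show "V - {} - {} \<noteq> {}" using V by auto
    show "\<forall>v\<in>V - {} - {}. bwin V E k (insert v {}) {} False"
    proof
      fix v assume v: "v \<in> V - {} - {}"
      show "bwin V E k (insert v {}) {} False"
      proof (cases "v = a")
        case True thus ?thesis
          by (intro L3[OF sg conn tw tw, of b c d]) (use S V dd v in auto)
      next
        case na: False
        show ?thesis
        proof (cases "v = b")
          case True thus ?thesis
            by (intro L3[OF sg conn tw tw, of a c d]) (use S V dd v in auto)
        next
          case nb: False
          show ?thesis
          proof (cases "v = c")
            case True thus ?thesis
              by (intro L3[OF sg conn tw tw, of a b d]) (use S V dd v in auto)
          next
            case False thus ?thesis
              by (intro L3[OF sg conn tw tw, of a b c]) (use S V dd v na nb in auto)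
          qed
        qed
      qed
    qed
  qed
qed

lemma bwin33:
  assumes sg: "simple_graph V E" and conn: "connected_graph V E"
    and S: "S = {a1, a2, a3}" "S \<subseteq> V" "T = {c1, c2, c3}" "T \<subseteq> V" "S \<inter> T = {}"
    and twS: "\<And>p q. p \<in> S \<Longrightarrow> q \<in> S \<Longrightarrow> twins V E p q"
    and twT: "\<And>p q. p \<in> T \<Longrightarrow> q \<in> T \<Longrightarrow> twins V E p q"
    and dd: "a1 \<noteq> a2" "a1 \<noteq> a3" "a2 \<noteq> a3" "c1 \<noteq> c2" "c1 \<noteq> c3" "c2 \<noteq> c3"
  shows "bwin V E k {} {} True" "bwin V E k {} {} False"
proof -
  show "bwin V E k {} {} False"
    by (rule L3[OF sg conn twS twS, of a1 a2 a3]) (use S dd in auto)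
  show "bwin V E k {} {} True"
  proof (rule bwin_maker)
    show "V - {} - {} \<noteq> {}" using S by auto
    show "\<forall>v\<in>V - {} - {}. bwin V E k (insert v {}) {} False"
    proof
      fix v assume v: "v \<in> V - {} - {}"
      show "bwin V E k (insert v {}) {} False"
      proof (cases "v \<in> S")
        case False thus ?thesis
          by (intro L3[OF sg conn twS twS, of a1 a2 a3]) (use S dd v in auto)
      next
        case True
        hence "v \<notin> T" using S by blast
        thus ?thesis
          by (intro L3[OF sg conn twT twT, of c1 c2 c3]) (use S dd v in auto)
      qed
    qed
  qed
qed

theorem corollary2p8:
  fixes V :: "'a set" and E :: "'a \<Rightarrow> 'a \<Rightarrow> bool" and k :: nat
  assumes "simple_graph V E" and "connected_graph V E" and "card V \<ge> 4" and "k \<ge> 1"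
  shows "((\<exists>v\<in>V. card (twin_class V E v) \<ge> 4) \<longrightarrow> outcome_Rk V E k = Outcome_B)
       \<and> ((\<exists>u\<in>V. \<exists>v\<in>V. twin_class V E u \<noteq> twin_class V E v
             \<and> card (twin_class V E u) = 3 \<and> card (twin_class V E v) = 3)
          \<longrightarrow> outcome_Rk V E k = Outcome_B)"
proof (intro conjI impI)
  note sg = assms(1) and conn = assms(2)
  have fin: "finite V" using sg unfolding simple_graph_def by blast
  have sub: "\<And>v. twin_class V E v \<subseteq> V" unfolding twin_class_def by blast
  {
    assume "\<exists>v\<in>V. card (twin_class V E v) \<ge> 4"
    then obtain v where v: "card (twin_class V E v) \<ge> 4" by blast
    obtain S where S: "S \<subseteq> twin_class V E v" "card S = 4"
      using obtain_subset_with_card_n[OF v] by blast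
    then obtain a b c d where abcd: "S = {a, b, c, d}" "a \<noteq> b" "a \<noteq> c" "a \<noteq> d" "b \<noteq> c" "b \<noteq> d" "c \<noteq> d"
      by (auto simp: card_Suc_eq numeral_eq_Suc) 
    have tw: "\<And>p q. p \<in> S \<Longrightarrow> q \<in> S \<Longrightarrow> twins V E p q"
      using class_twins[OF sg] S by blast
    have "S \<subseteq> V" using S sub by blast
    moreover have m: "a \<in> S" "b \<in> S" "c \<in> S" "d \<in> S" using abcd by auto
    ultimately have "bwin V E k {} {} True" "bwin V E k {} {} False"
      using bwin4[OF sg conn m _ tw abcd(2-7)] by auto
    thus "outcome_Rk V E k = Outcome_B" by (rule outcome_B)
  }
  {
    assume "\<exists>u\<in>V. \<exists>v\<in>V. twin_class V E u \<noteq> twin_class V E v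
             \<and> card (twin_class V E u) = 3 \<and> card (twin_class V E v) = 3"
    then obtain u v where uv: "twin_class V E u \<noteq> twin_class V E v"
      "card (twin_class V E u) = 3" "card (twin_class V E v) = 3" by blast
    have disj: "twin_class V E u \<inter> twin_class V E v = {}"
    proof (rule ccontr)
      assume "twin_class V E u \<inter> twin_class V E v \<noteq> {}"
      then obtain w where w: "twins V E w u" "twins V E w v" unfolding twin_class_def by blast
      have uv': "twins V E u v" using twins_trans2[OF sg twins_sym[OF w(1)] w(2)] .
      have "\<And>p. twins V E p u = twins V E p v"
        using twins_trans2[OF sg _ uv'] twins_trans2[OF sg _ twins_sym[OF uv']] by blast
      hence "twin_class V E u = twin_class V E v"
        unfolding twin_class_def by simp
      thus False using uv(1) by blast
    qed
    obtain a1 a2 a3 where a: "twin_class V E u = {a1, a2, a3}" "a1 \<noteq> a2" "a2 \<noteq> a3" "a1 \<noteq> a3"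
      using uv(2) card_3_iff by metis
    obtain c1 c2 c3 where c: "twin_class V E v = {c1, c2, c3}" "c1 \<noteq> c2" "c2 \<noteq> c3" "c1 \<noteq> c3"
      using uv(3) card_3_iff by metis
    have twU: "\<And>p q. p \<in> twin_class V E u \<Longrightarrow> q \<in> twin_class V E u \<Longrightarrow> twins V E p q"
      by (rule class_twins[OF sg])
    have twV: "\<And>p q. p \<in> twin_class V E v \<Longrightarrow> q \<in> twin_class V E v \<Longrightarrow> twins V E p q"
      by (rule class_twins[OF sg])
    have "bwin V E k {} {} True" "bwin V E k {} {} False"
      using bwin33[OF sg conn a(1) sub c(1) sub disj twU twV, of k] a(2-4) c(2-4)
      by (simp_all add: neq_commute)
    thus "outcome_Rk V E k = Outcome_B" by (rule outcome_B)
  }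
qed

end
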